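(* Let $d\geq 7$. There exists no smooth function $f:[0,\infty)\to\mathbb{R}$ solving $$f''(y)+\left(\frac{d-1}{y}-\frac{y}{2}\right)f'(y)-\frac{d-1}{2y^2}\sin(2f(y))=0\quad\text{for all } y>0$$ and satisfying both of the following conditions: (i) $f(0)=0$ and $f'(0)=a$ for some $a>0$; (ii) $\lim_{y\to\infty}f(y)=b$ for some $b\in\mathbb{R}$, and $\lim_{y\to\infty}y^3f'(y)=-(d-1)\sin(2b)$.
   Context: The equation is the ordinary differential equation for self-similar shrinking solutions $v(t,r)=f(r/\sqrt{-t})$, $t<0$, of the equivariant harmonic map heat flow $v_t=v_{rr}+\frac{d-1}{r}v_r-\frac{d-1}{2r^2}\sin(2v)$ from $\mathbb{R}^d$ to $S^d$. Here "smooth" means $f\in C^\infty([0,\infty))$. *)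

theory Defs
  imports "HOL-Analysis.Analysis"
begin

definition smooth_on_halfline :: "(real \<Rightarrow> real) \<Rightarrow> bool" where
  "smooth_on_halfline f \<longleftrightarrow>
     (\<exists>D :: nat \<Rightarrow> real \<Rightarrow> real. D 0 = f \<and>
        (\<forall>n. \<forall>y\<ge>0. (D n has_real_derivative D (Suc n) y) (at y within {0..})))"

end

theory Submission
  imports Defs "HOL-Real_Asymp.Real_Asymp"
begin


lemma first_zero:
  fixes h :: "real \<Rightarrow> real"
  assumes ab: "a < b" and hc: "continuous_on {a..b} h" and ha: "h a < 0" and hb: "h b \<ge> 0"
  shows "\<exists>c. a < c \<and> c \<le> b \<and> h c = 0 \<and> (\<forall>x. a \<le> x \<and> x < c \<longrightarrow> h x < 0)"
proof -
  define S where "S = {a..b} \<inter> h -` {0..}"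
  have cl: "closed S" unfolding S_def
    by (rule continuous_closed_preimage[OF hc]) auto
  have "b \<in> S" using ab hb unfolding S_def by auto
  then have ne: "S \<noteq> {}" by blast
  have bdd: "bdd_below S" unfolding S_def by (auto intro: bdd_belowI[of _ a])
  define c where "c = Inf S"
  have cS: "c \<in> S" unfolding c_def using closed_contains_Inf[OF ne bdd cl] .
  have lt: "h x < 0" if "a \<le> x" "x < c" for x
  proof (rule ccontr)
    assume "\<not> h x < 0"
    then have "x \<in> S" using that cS unfolding S_def by auto
    then have "c \<le> x" unfolding c_def using bdd by (simp add: cInf_lower)
    then show False using that by simp
  qed
  have ac: "a \<le> c" "c \<le> b" using cS unfolding S_def by auto
  have "h c \<ge> 0" using cS unfolding S_def by auto
  then obtain z where z: "a \<le> z" "z \<le> c" "h z = 0"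
    using IVT'[of h a 0 c] ha ac continuous_on_subset[OF hc] by force
  have "z \<in> S" using z ac unfolding S_def by auto
  then have "c \<le> z" unfolding c_def using bdd by (simp add: cInf_lower)
  then have "z = c" using z by simp
  moreover have "a \<noteq> c" using ha z \<open>z = c\<close> by auto
  ultimately show ?thesis using z ac lt by (intro exI[of _ c]) auto
qed

lemma sin_lt_x: fixes x :: real assumes "x > 0" shows "sin x < x"
proof (cases "x \<le> 1")
  case True
  have "(\<lambda>x. x - sin x) 0 < (\<lambda>x. x - sin x) x"
  proof (rule DERIV_pos_imp_increasing_open[OF assms])
    fix u assume u: "0 < u" "u < x"
    have "cos u < cos 0" using u True pi_gt3 by (intro cos_monotone_0_pi) auto
    then show "\<exists>y. ((\<lambda>x. x - sin x) has_real_derivative y) (at u) \<and> y > 0"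
      by (intro exI[of _ "1 - cos u"]) (auto intro!: derivative_eq_intros)
  qed (intro continuous_intros)
  then show ?thesis by simp
next
  case False
  then show ?thesis using sin_le_one[of x] by linarith
qed



lemma deriv_left_nonneg:
  fixes h :: "real \<Rightarrow> real"
  assumes D: "(h has_real_derivative D) (at z)" and a: "a < z" and lt: "\<forall>x. a \<le> x \<and> x < z \<longrightarrow> h x < h z"
  shows "D \<ge> 0"
proof -
  have "((\<lambda>y. (h y - h z) / (y - z)) \<longlongrightarrow> D) (at_left z)"
    using has_field_derivative_at_within[OF D] by (simp add: has_field_derivative_iff)
  moreover have "eventually (\<lambda>y. (h y - h z) / (y - z) \<ge> 0) (at_left z)"
    unfolding eventually_at_left_field using a lt
    by (intro exI[of _ a]) (auto simp: zero_le_divide_iff less_imp_le)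
  ultimately show ?thesis by (rule tendsto_lowerbound) simp
qed

lemma deriv_left_nonpos:
  fixes h :: "real \<Rightarrow> real"
  assumes D: "(h has_real_derivative D) (at z)" and a: "a < z" and lt: "\<forall>x. a \<le> x \<and> x < z \<longrightarrow> h x > h z"
  shows "D \<le> 0"
proof -
  have "((\<lambda>y. (h y - h z) / (y - z)) \<longlongrightarrow> D) (at_left z)"
    using has_field_derivative_at_within[OF D] by (simp add: has_field_derivative_iff)
  moreover have "eventually (\<lambda>y. (h y - h z) / (y - z) \<le> 0) (at_left z)"
    unfolding eventually_at_left_field using a lt
    by (intro exI[of _ a]) (auto simp: divide_le_0_iff less_imp_le)
  ultimately show ?thesis by (rule tendsto_upperbound) simp
qed

lemma deriv_pos_right:
  fixes h :: "real \<Rightarrow> real"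
  assumes D: "(h has_real_derivative D) (at z)" and pos: "D > 0"
  shows "\<exists>e>0. \<forall>x. z < x \<and> x < z + e \<longrightarrow> h x > h z"
proof -
  have "((\<lambda>y. (h y - h z) / (y - z)) \<longlongrightarrow> D) (at_right z)"
    using has_field_derivative_at_within[OF D] by (simp add: has_field_derivative_iff)
  then have "eventually (\<lambda>y. (h y - h z) / (y - z) > 0) (at_right z)"
    using pos by (rule order_tendstoD)
  then obtain b where b: "b > z" "\<forall>y>z. y < b \<longrightarrow> (h y - h z) / (y - z) > 0"
    unfolding eventually_at_right_field by blast
  show ?thesis
  proof (intro exI[of _ "b - z"] conjI allI impI)
    show "b - z > 0" using b by simp
    fix x assume x: "z < x \<and> x < z + (b - z)"
    then have "(h x - h z) / (x - z) > 0" using b by auto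
    then show "h x > h z" using x by (simp add: zero_less_divide_iff)
  qed
qed

locale shr =
  fixes d :: nat and f F1 F2 :: "real \<Rightarrow> real" and b L :: real
  assumes d7: "d \<ge> 7"
  and f0: "f 0 = 0"
  and contf: "continuous_on {0..} f" and contF1: "continuous_on {0..} F1"
  and df: "\<And>y. y > 0 \<Longrightarrow> (f has_real_derivative F1 y) (at y)"
  and dF1: "\<And>y. y > 0 \<Longrightarrow> (F1 has_real_derivative F2 y) (at y)"
  and ode: "\<And>y. y > 0 \<Longrightarrow> F2 y + ((real d - 1)/y - y/2) * F1 y - (real d - 1)/(2*y^2) * sin (2 * f y) = 0"
  and fpos: "\<exists>\<delta>>0. \<forall>y. 0<y \<and> y<\<delta> \<longrightarrow> f y > 0"
  and limf: "(f \<longlongrightarrow> b) at_top"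
  and lim3: "((\<lambda>y. y^3 * F1 y) \<longlongrightarrow> L) at_top"
begin

definition "w (y::real) = y^(d-1) * exp(-(y^2)/4)"
definition "cc = 1/(2*real d - 8)"
definition "v y = 1/y^2 - cc"
definition "W y = w y * (F1 y * v y + 2*(f y - pi/2)/y^3)"
definition "Z y = w y * F1 y"

lemma w_fun: "w = (\<lambda>y. y^(d-1) * exp(-(y^2)/4))" by (rule ext) (simp add: w_def)

lemma dn: obtains n where "d = n + 7"
  using d7 by (metis add.commute le_add_diff_inverse)

lemma eqF2: "y > 0 \<Longrightarrow> F2 y = (real d - 1)/(2*y^2) * sin (2 * f y) - ((real d - 1)/y - y/2) * F1 y"
  using ode[of y] by linarith

lemma w_deriv: assumes "y > 0" shows "(w has_real_derivative w y * ((real d - 1)/y - y/2)) (at y)"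
proof -
  obtain n where n: "d = n + 7" by (rule dn)
  have "((\<lambda>y. y^(6+n) * exp(-(y^2)/4)) has_real_derivative (y^(6+n) * exp(-(y^2)/4)) * ((real (n+7) - 1)/y - y/2)) (at y)"
    apply (rule derivative_eq_intros refl | simp)+
    using assms by (simp add: field_simps power_eq_if)
  then show ?thesis unfolding w_fun unfolding n by simp
qed

lemma W_deriv: assumes y: "y > 0"
  shows "(W has_real_derivative w y * (1/y^2) * v y * ((2*real d-8)*(f y - pi/2) + (real d-1)/2 * sin(2*f y))) (at y)"
proof -
  have W_fun: "W = (\<lambda>y. w y * (F1 y * (1/y^2 - cc) + 2*(f y - pi/2)/y^3))"
    by (rule ext) (simp add: W_def v_def)
  have d7': "real d \<ge> 7" using d7 by simp
  have D: "(W has_real_derivative w y * ((real d - 1)/y - y/2) * (F1 y * v y + 2*(f y - pi/2)/y^3)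
     + w y * (F2 y * v y + F1 y * (-2/y^3) + 2 * F1 y / y^3 - 6*(f y - pi/2)/y^4)) (at y)"
    unfolding W_fun using y
    by (auto intro!: derivative_eq_intros w_deriv df dF1 simp: v_def field_simps power_eq_if)
  have E: "w y * ((real d - 1)/y - y/2) * (F1 y * v y + 2*(f y - pi/2)/y^3)
     + w y * (F2 y * v y + F1 y * (-2/y^3) + 2 * F1 y / y^3 - 6*(f y - pi/2)/y^4)
     = w y * (1/y^2) * v y * ((2*real d-8)*(f y - pi/2) + (real d-1)/2 * sin(2*f y))"
  proof -
    have c1: "cc * (2*real d - 8) = 1" using d7' by (simp add: cc_def)
    have "w y * ((real d - 1)/y - y/2) * (F1 y * v y + 2*(f y - pi/2)/y^3)
     + w y * (F2 y * v y + F1 y * (-2/y^3) + 2 * F1 y / y^3 - 6*(f y - pi/2)/y^4)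
     - w y * (1/y^2) * v y * ((2*real d-8)*(f y - pi/2) + (real d-1)/2 * sin(2*f y))
     = w y * (f y - pi/2) * (cc*(2*real d-8) - 1) / y^2"
      using y by (simp add: eqF2[OF y] v_def field_simps power_eq_if)
    then show ?thesis using c1 by simp
  qed
  show ?thesis using D E by simp
qed

lemma Z_deriv: assumes y: "y > 0"
  shows "(Z has_real_derivative w y * (real d - 1)/(2*y^2) * sin (2 * f y)) (at y)"
proof -
  have Z_fun: "Z = (\<lambda>y. w y * F1 y)" by (rule ext) (simp add: Z_def)
  show ?thesis unfolding Z_fun
    apply (rule derivative_eq_intros refl w_deriv df dF1 | simp add: y)+
    using y by (simp add: eqF2 field_simps)
qed

lemma pe: "((\<lambda>y::real. y^k * exp(-(y^2)/4)) \<longlongrightarrow> 0) at_top"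
  by real_asymp

lemma hsign_gen:
  fixes x :: real
  shows "x > 0 \<Longrightarrow> (2*real d - 8)*x - (real d - 1)/2 * sin(2*x) > 0"
    and "x < 0 \<Longrightarrow> (2*real d - 8)*x - (real d - 1)/2 * sin(2*x) < 0"
proof -
  have d7': "real d \<ge> 7" using d7 by simp
  { assume x: "x > 0"
    have "sin (2*x) < 2*x" using sin_lt_x[of "2*x"] x by simp
    then have "(real d - 1)/2 * sin(2*x) < (real d - 1)/2*(2*x)"
      using d7' by (intro mult_strict_left_mono) auto
    also have "\<dots> \<le> (2*real d - 8)*x" using d7' x by (simp add: field_simps)
    finally show "(2*real d - 8)*x - (real d - 1)/2 * sin(2*x) > 0" by simp }
  { assume x: "x < 0"
    have "sin (-2*x) < -2*x" using sin_lt_x[of "-2*x"] x by simp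
    then have "sin (2*x) > 2*x" by simp
    then have "(real d - 1)/2 * sin(2*x) > (real d - 1)/2*(2*x)"
      using d7' by (intro mult_strict_left_mono) auto
    moreover have "(real d - 1)/2*(2*x) \<ge> (2*real d - 8)*x" using d7' x
      by (simp add: field_simps mult_right_mono_neg)
    ultimately show "(2*real d - 8)*x - (real d - 1)/2 * sin(2*x) < 0" by simp }
qed

lemma hsign:
  shows "f y > pi/2 \<Longrightarrow> (2*real d-8)*(f y - pi/2) + (real d-1)/2 * sin(2*f y) > 0"
    and "f y < pi/2 \<Longrightarrow> (2*real d-8)*(f y - pi/2) + (real d-1)/2 * sin(2*f y) < 0"
proof -
  have e: "2*(f y - pi/2) = 2*f y - pi" by (simp add: algebra_simps)
  have s: "sin (2*(f y - pi/2)) = - sin (2*f y)"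
    unfolding e by (rule sin_minus_pi)
  show "f y > pi/2 \<Longrightarrow> (2*real d-8)*(f y - pi/2) + (real d-1)/2 * sin(2*f y) > 0"
    using hsign_gen(1)[of "f y - pi/2"] unfolding s mult_minus_right by linarith
  show "f y < pi/2 \<Longrightarrow> (2*real d-8)*(f y - pi/2) + (real d-1)/2 * sin(2*f y) < 0"
    using hsign_gen(2)[of "f y - pi/2"] unfolding s mult_minus_right by linarith
qed

lemma F1_0: "(F1 \<longlongrightarrow> F1 0) (at_right 0)"
proof -
  have "(F1 \<longlongrightarrow> F1 0) (at 0 within {0..})" using contF1 by (simp add: continuous_on_def)
  then show ?thesis by (rule tendsto_within_subset) auto
qed

lemma f_0: "(f \<longlongrightarrow> f 0) (at_right 0)"
proof -
  have "(f \<longlongrightarrow> f 0) (at 0 within {0..})" using contf by (simp add: continuous_on_def)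
  then show ?thesis by (rule tendsto_within_subset) auto
qed

lemma W_lim0: "(W \<longlongrightarrow> 0) (at_right 0)"
proof -
  obtain n where n: "d = n + 7" by (rule dn)
  let ?e = "\<lambda>y::real. exp(-(y^2)/4)"
  have ev: "eventually (\<lambda>y. F1 y * (y^(n+4) * ?e y - cc * (y^(n+6) * ?e y)) + (f y - pi/2) * (2 * (y^(n+3) * ?e y)) = W y) (at_right 0)"
    using eventually_at_right_less[of "0::real"]
    unfolding W_def w_def v_def by eventually_elim (simp add: n field_simps power_add eval_nat_numeral)
  have "((\<lambda>y. F1 y * (y^(n+4) * ?e y - cc * (y^(n+6) * ?e y)) + (f y - pi/2) * (2 * (y^(n+3) * ?e y))) \<longlongrightarrow>
     F1 0 * (0^(n+4) * ?e 0 - cc * (0^(n+6) * ?e 0)) + (f 0 - pi/2) * (2 * (0^(n+3) * ?e 0))) (at_right 0)"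
    by (intro tendsto_intros F1_0 f_0) auto
  then have "((\<lambda>y. F1 y * (y^(n+4) * ?e y - cc * (y^(n+6) * ?e y)) + (f y - pi/2) * (2 * (y^(n+3) * ?e y))) \<longlongrightarrow> 0) (at_right 0)"
    by (simp add: power_add)
  then show ?thesis using ev by (rule Lim_transform_eventually)
qed

lemma Z_lim0: "(Z \<longlongrightarrow> 0) (at_right 0)"
proof -
  obtain n where n: "d = n + 7" by (rule dn)
  have "((\<lambda>y. F1 y * (y^(n+6) * exp(-(y^2)/4))) \<longlongrightarrow> F1 0 * (0^(n+6) * exp(-(0^2)/4))) (at_right 0)"
    by (intro tendsto_intros F1_0) auto
  then have "((\<lambda>y. F1 y * (y^(n+6) * exp(-(y^2)/4))) \<longlongrightarrow> 0) (at_right 0)" by (simp add: power_add)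
  moreover have "(\<lambda>y. F1 y * (y^(n+6) * exp(-(y^2)/4))) = Z"
    unfolding Z_def w_def by (rule ext) (simp add: n add.commute)
  ultimately show ?thesis by simp
qed

lemma W_limtop: "(W \<longlongrightarrow> 0) at_top"
proof -
  obtain n where n: "d = n + 7" by (rule dn)
  let ?e = "\<lambda>y::real. exp(-(y^2)/4)"
  have ev: "eventually (\<lambda>y. (y^3 * F1 y) * (y^(n+1) * ?e y - cc * (y^(n+3) * ?e y)) + (f y - pi/2) * (2 * (y^(n+3) * ?e y)) = W y) at_top"
    using eventually_gt_at_top[of 0]
    unfolding W_def w_def v_def by eventually_elim (simp add: n field_simps power_add eval_nat_numeral)
  have "((\<lambda>y. (y^3 * F1 y) * (y^(n+1) * ?e y - cc * (y^(n+3) * ?e y)) + (f y - pi/2) * (2 * (y^(n+3) * ?e y))) \<longlongrightarrow>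
     L * (0 - cc * 0) + (b - pi/2) * (2 * 0)) at_top"
    by (intro tendsto_intros lim3 limf pe)
  then have "((\<lambda>y. (y^3 * F1 y) * (y^(n+1) * ?e y - cc * (y^(n+3) * ?e y)) + (f y - pi/2) * (2 * (y^(n+3) * ?e y))) \<longlongrightarrow> 0) at_top"
    by simp
  then show ?thesis using ev by (rule Lim_transform_eventually)
qed

lemma Z_limtop: "(Z \<longlongrightarrow> 0) at_top"
proof -
  obtain n where n: "d = n + 7" by (rule dn)
  have ev: "eventually (\<lambda>y. (y^3 * F1 y) * (y^(n+3) * exp(-(y^2)/4)) = Z y) at_top"
    using eventually_gt_at_top[of 0]
    unfolding Z_def w_def by eventually_elim (simp add: n field_simps power_add eval_nat_numeral)
  have "((\<lambda>y. (y^3 * F1 y) * (y^(n+3) * exp(-(y^2)/4))) \<longlongrightarrow> L * 0) at_top"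
    by (intro tendsto_intros lim3 pe)
  then show ?thesis using ev by (simp add: Lim_transform_eventually)
qed

lemma uniq_bound:
  assumes y: "z0 \<le> y" "y \<le> z" and z0: "0 < z0"
  defines "K \<equiv> 1 + 2*((real d - 1)/z0 + z/2) + (real d - 1)/z0^2"
  shows "2*(f y - pi/2)*F1 y + 2*F1 y*F2 y + K*((f y - pi/2)^2 + (F1 y)^2) \<ge> 0"
proof -
  define g where "g = f y - pi/2"
  define p where "p = F1 y"
  define S where "S = sin (2 * f y)"
  define P where "P = (real d - 1)/y - y/2"
  define q where "q = (real d - 1)/y^2"
  define E where "E = g^2 + p^2"
  define M where "M = (real d - 1)/z0 + z/2"
  define q0 where "q0 = (real d - 1)/z0^2"
  have d7': "real d \<ge> 7" using d7 by simp
  have ypos: "y > 0" using y z0 by simp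
  have F2: "F2 y = q/2 * S - P * p" using eqF2[OF ypos] unfolding q_def S_def P_def p_def
    by (simp add: field_simps)
  have E0: "E \<ge> 0" unfolding E_def by simp
  have "0 \<le> (g+p)^2" by simp
  then have a1: "-(2*g*p) \<le> E" unfolding E_def power2_sum by linarith
  have "0 \<le> (\<bar>g\<bar>-\<bar>p\<bar>)^2" by simp
  then have gp: "2*\<bar>g\<bar>*\<bar>p\<bar> \<le> E" unfolding E_def power2_diff by simp
  have sS: "S = - sin (2*g)" unfolding S_def g_def
    by (simp add: right_diff_distrib)
  have aS: "\<bar>S\<bar> \<le> 2*\<bar>g\<bar>" unfolding sS using abs_sin_x_le_abs_x[of "2*g"] by simp
  have q0: "0 \<le> q" "q \<le> q0" unfolding q_def q0_def using d7' y z0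
    by (auto intro!: divide_left_mono power_mono mult_pos_pos)
  have "\<bar>q*p*S\<bar> = q*\<bar>p\<bar>*\<bar>S\<bar>" using q0 by (simp add: abs_mult)
  also have "\<dots> \<le> q*\<bar>p\<bar>*(2*\<bar>g\<bar>)" using aS q0 by (intro mult_left_mono) auto
  also have "\<dots> = q*(2*\<bar>g\<bar>*\<bar>p\<bar>)" by simp
  also have "\<dots> \<le> q*E" using gp q0 by (intro mult_left_mono) auto
  also have "\<dots> \<le> q0*E" using q0 E0 by (intro mult_right_mono) auto
  finally have a3: "-(q*p*S) \<le> q0*E" by simp
  have PM: "\<bar>P\<bar> \<le> M" unfolding P_def M_def
  proof -
    have "0 \<le> (real d - 1)/y" using ypos d7' by simp
    then have "\<bar>(real d - 1)/y - y/2\<bar> \<le> (real d - 1)/y + y/2" using ypos by (auto simp: abs_le_iff)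
    also have "(real d - 1)/y \<le> (real d - 1)/z0" using y z0 d7' by (intro divide_left_mono) auto
    then have "(real d - 1)/y + y/2 \<le> (real d - 1)/z0 + z/2" using y by simp
    finally show "\<bar>(real d - 1)/y - y/2\<bar> \<le> (real d - 1)/z0 + z/2" .
  qed
  have "P*p^2 \<le> \<bar>P\<bar>*p^2" by (simp add: mult_right_mono)
  also have "\<dots> \<le> M*p^2" using PM by (simp add: mult_right_mono)
  also have "\<dots> \<le> M*E" unfolding E_def using PM by (intro mult_left_mono) auto
  finally have a4: "P*p^2 \<le> M*E" .
  have K: "K = 1 + 2*M + q0" unfolding K_def M_def q0_def by simp
  have "2*g*p + 2*p*F2 y + K*E = 2*g*p + q*p*S - 2*P*p^2 + K*E" unfolding F2 by (simp add: algebra_simps power2_eq_square)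
  also have "\<dots> \<ge> 0" unfolding K using a1 a3 a4 by (simp add: algebra_simps)
  finally show ?thesis unfolding g_def p_def E_def by simp
qed

lemma uniq:
  assumes z0: "0 < z0" "z0 < z" and fz: "f z = pi/2" and F1z: "F1 z = 0"
  shows "f z0 = pi/2"
proof -
  define K where "K = 1 + 2*((real d - 1)/z0 + z/2) + (real d - 1)/z0^2"
  define G where "G = (\<lambda>y. ((f y - pi/2)^2 + (F1 y)^2) * exp (K*y))"
  have "G z0 \<le> G z"
  proof (rule DERIV_nonneg_imp_nondecreasing[of z0 z G])
    show "z0 \<le> z" using z0 by simp
    fix y assume y: "z0 \<le> y" "y \<le> z"
    have ypos: "y > 0" using y z0 by simp
    have "(G has_real_derivative (2*(f y - pi/2)*F1 y + 2*F1 y*F2 y + K*((f y - pi/2)^2 + (F1 y)^2)) * exp (K*y)) (at y)"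
      unfolding G_def
      by (auto intro!: derivative_eq_intros df[OF ypos] dF1[OF ypos] simp: algebra_simps)
    moreover have "(2*(f y - pi/2)*F1 y + 2*F1 y*F2 y + K*((f y - pi/2)^2 + (F1 y)^2)) * exp (K*y) \<ge> 0"
      using uniq_bound[OF y z0(1)] unfolding K_def by simp
    ultimately show "\<exists>D. (G has_real_derivative D) (at y) \<and> D \<ge> 0" by blast
  qed
  also have "G z = 0" unfolding G_def using fz F1z by simp
  finally have "((f z0 - pi/2)^2 + (F1 z0)^2) * exp (K*z0) \<le> 0" unfolding G_def by simp
  then have "(f z0 - pi/2)^2 + (F1 z0)^2 \<le> 0" by (simp add: mult_le_0_iff)
  moreover have "(F1 z0)^2 \<ge> 0" "(f z0 - pi/2)^2 \<ge> 0" by simp_all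
  ultimately have "(f z0 - pi/2)^2 = 0" by linarith
  then show ?thesis by simp
qed

lemma W_cont: "0 < s \<Longrightarrow> continuous_on {s..x} W"
  by (intro continuous_at_imp_continuous_on ballI DERIV_isCont[OF W_deriv]) auto

lemma Z_cont: "0 < s \<Longrightarrow> continuous_on {s..x} Z"
  by (intro continuous_at_imp_continuous_on ballI DERIV_isCont[OF Z_deriv]) auto

lemma w_pos: "y > 0 \<Longrightarrow> w y > 0" by (simp add: w_def)

lemma Z_inc:
  assumes "0 < s" "s < x" "\<forall>y. s < y \<and> y < x \<longrightarrow> 0 < f y \<and> f y < pi/2"
  shows "Z s < Z x"
proof (rule DERIV_pos_imp_increasing_open[OF assms(2) _ Z_cont[OF assms(1)]])
  fix y assume y: "s < y" "y < x"
  then have yp: "y > 0" and fy: "0 < f y" "f y < pi/2" using assms by auto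
  have "sin (2 * f y) > 0" using fy by (intro sin_gt_zero) auto
  then have "w y * (real d - 1)/(2*y^2) * sin (2 * f y) > 0"
    using w_pos[OF yp] yp d7 by (intro mult_pos_pos divide_pos_pos) auto
  then show "\<exists>D. (Z has_real_derivative D) (at y) \<and> D > 0" using Z_deriv[OF yp] by blast
qed

lemma W_dec:
  assumes "0 < s" "s < x" "\<forall>y. s < y \<and> y < x \<longrightarrow> (v y > 0 \<and> f y < pi/2) \<or> (v y < 0 \<and> f y > pi/2)"
  shows "W x < W s"
proof (rule DERIV_neg_imp_decreasing_open[OF assms(2) _ W_cont[OF assms(1)]])
  fix y assume y: "s < y" "y < x"
  then have yp: "y > 0" using assms by auto
  have wp: "w y * (1/y^2) > 0" using w_pos[OF yp] yp by simp
  have "v y * ((2*real d-8)*(f y - pi/2) + (real d-1)/2 * sin(2*f y)) < 0"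
    using assms(3) y hsign[of y] by (auto simp: mult_pos_neg mult_neg_pos)
  then have "w y * (1/y^2) * v y * ((2*real d-8)*(f y - pi/2) + (real d-1)/2 * sin(2*f y)) < 0"
    using mult_pos_neg[OF wp] by (simp only: mult.assoc)
  then show "\<exists>D. (W has_real_derivative D) (at y) \<and> D < 0" using W_deriv[OF yp] by blast
qed

lemma W_dec_R:
  assumes "0 < s" "s < x" "\<And>y. s < y \<Longrightarrow> y < x \<Longrightarrow> v y < 0" "\<And>y. s < y \<Longrightarrow> y < x \<Longrightarrow> f y > pi/2"
  shows "W x < W s"
proof (rule W_dec[OF assms(1,2)])
  show "\<forall>y. s < y \<and> y < x \<longrightarrow> (v y > 0 \<and> f y < pi/2) \<or> (v y < 0 \<and> f y > pi/2)"
    using assms(3,4) by blast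
qed

lemma v_mono: "0 < y \<Longrightarrow> y < x \<Longrightarrow> v x < v y"
  unfolding v_def by (simp add: divide_strict_left_mono power_strict_mono)

lemma f_contI: "continuous_on {s..t} (\<lambda>x. f x - pi/2)" if "0 \<le> s" for s t
  using that by (intro continuous_intros continuous_on_subset[OF contf]) auto

lemma caseA:
  assumes A: "\<forall>t>0. f t < pi/2"
  shows False
proof -
  obtain \<delta> where \<delta>: "\<delta> > 0" "\<forall>y. 0<y \<and> y<\<delta> \<longrightarrow> f y > 0" using fpos by blast
  have fp: "f t > 0" if t: "t > 0" for t
  proof (rule ccontr)
    assume "\<not> f t > 0"
    then have ft: "f t \<le> 0" by simp
    have "\<not> t < \<delta>" using \<delta>(2) t ft by force
    then have ta: "\<delta>/2 < t" using \<delta>(1) by linarith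
    have "continuous_on {\<delta>/2..t} (\<lambda>x. - f x)"
      using \<delta> by (intro continuous_intros continuous_on_subset[OF contf]) auto
    moreover have "(\<lambda>x. - f x) (\<delta>/2) < 0" using \<delta> by simp
    ultimately obtain c where c: "\<delta>/2 < c" "c \<le> t" "f c = 0" "\<forall>x. \<delta>/2 \<le> x \<and> x < c \<longrightarrow> f x > 0"
      using first_zero[OF ta, of "\<lambda>x. - f x"] ft by auto
    have fpos': "0 < f y" if "0 < y" "y < c" for y
      using \<delta> c that by (cases "y < \<delta>/2") auto
    have cpos: "c > 0" using c \<delta> by linarith
    have fin: "0 < f y \<and> f y < pi/2" if "0 < y" "y < c" for y using fpos'[OF that] A that by auto
    have Zi: "Z s < Z x" if "0 < s" "s < x" "x \<le> c" for s x using that fin by (intro Z_inc) auto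
    have "Z (c/2) < Z c"
      using cpos by (intro Zi) auto
    moreover have "0 \<le> Z (c/2)"
    proof (rule tendsto_upperbound[OF Z_lim0])
      show "\<forall>\<^sub>F x in at_right 0. Z x \<le> Z (c / 2)"
        unfolding eventually_at_right_field using cpos
        by (intro exI[of _ "c/2"]) (auto intro!: less_imp_le Zi)
    qed simp
    moreover have "F1 c \<le> 0"
      by (rule deriv_left_nonpos[OF df, of c "c/2"]) (use cpos c(3) fpos' in auto)
    then have "Z c \<le> 0" unfolding Z_def using w_pos[of c] cpos
      by (simp add: mult_nonneg_nonpos)
    ultimately show False by simp
  qed
  have fin: "0 < f y \<and> f y < pi/2" if "0 < y" for y using fp A that by auto
  have Zi: "Z s < Z x" if "0 < s" "s < x" for s x using that fin by (intro Z_inc) auto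
  have "Z 1 < Z 2" using Zi by simp
  moreover have "0 \<le> Z 1"
  proof (rule tendsto_upperbound[OF Z_lim0])
    show "\<forall>\<^sub>F x in at_right 0. Z x \<le> Z 1"
      unfolding eventually_at_right_field
        by (intro exI[of _ 1]) (auto intro!: less_imp_le Zi)
  qed simp
  moreover have "Z 2 \<le> 0"
  proof (rule tendsto_lowerbound[OF Z_limtop])
    show "\<forall>\<^sub>F x in at_top. Z 2 \<le> Z x"
      using eventually_gt_at_top[of 2]
      by eventually_elim (auto intro!: less_imp_le Zi)
  qed simp
  ultimately show False by simp
qed

lemma caseB:
  assumes t: "t > 0" "f t \<ge> pi/2"
  shows False
proof -
  have "(\<lambda>x. f x - pi/2) 0 < 0" using f0 by simp
  then obtain y1 where y1: "0 < y1" "y1 \<le> t" "f y1 = pi/2" "\<forall>x. 0 \<le> x \<and> x < y1 \<longrightarrow> f x < pi/2"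
    using first_zero[OF t(1) f_contI[of 0 t]] t(2) by auto
  have F1nn: "F1 y1 \<ge> 0"
    by (rule deriv_left_nonneg[OF df[OF y1(1)], of 0]) (use y1 in auto)
  have Wy1: "W y1 = w y1 * F1 y1 * v y1" unfolding W_def using y1(3) by simp
  show False
  proof (cases "v y1 \<ge> 0")
    case True
    have Wd: "W x < W s" if "0 < s" "s < x" "x \<le> y1" for s x
    proof (rule W_dec[OF that(1,2)])
      show "\<forall>y. s < y \<and> y < x \<longrightarrow> (v y > 0 \<and> f y < pi/2) \<or> (v y < 0 \<and> f y > pi/2)"
      proof (intro allI impI disjI1 conjI)
        fix y assume y: "s < y \<and> y < x"
        then have "v y1 < v y" using v_mono[of y y1] that by auto
        then show "0 < v y" using True by linarith
        show "f y < pi/2" using y1(4) y that by auto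
      qed
    qed
    have "W y1 < W (y1/2)" using y1 by (intro Wd) auto
    moreover have "W (y1/2) \<le> 0"
    proof (rule tendsto_lowerbound[OF W_lim0])
      show "\<forall>\<^sub>F x in at_right 0. W (y1/2) \<le> W x"
        unfolding eventually_at_right_field using y1(1)
        by (intro exI[of _ "y1/2"]) (auto intro!: less_imp_le Wd)
    qed simp
    moreover have "W y1 \<ge> 0" unfolding Wy1 using w_pos[OF y1(1)] F1nn True by simp
    ultimately show False by simp
  next
    case False
    then have vneg: "v y1 < 0" by simp
    have "F1 y1 \<noteq> 0"
    proof
      assume "F1 y1 = 0"
      moreover have "0 < y1/2" "y1/2 < y1" using y1(1) by simp_all
      ultimately have "f (y1/2) = pi/2" using y1(3) uniq by blast
      moreover have "f (y1/2) < pi/2" using y1(4) y1(1) by simp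
      ultimately show False by simp
    qed
    then have F1p: "F1 y1 > 0" using F1nn by simp
    have "w y1 * F1 y1 > 0" using w_pos[OF y1(1)] F1p by simp
    then have Wy1n: "W y1 < 0" unfolding Wy1 using vneg by (rule mult_pos_neg)
    obtain e where e: "e > 0" "\<forall>x. y1 < x \<and> x < y1 + e \<longrightarrow> f x > f y1"
      using deriv_pos_right[OF df[OF y1(1)] F1p] by blast
    have vn: "v x < 0" if "y1 \<le> x" for x
    proof (cases "x = y1")
      case True then show ?thesis using vneg by simp
    next
      case False
      then have yx: "y1 < x" using that by simp
      show ?thesis using v_mono[OF y1(1) yx] vneg by simp
    qed
    show False
    proof (cases "\<exists>t>y1. f t \<le> pi/2")
      case True
      then obtain t2 where t2: "t2 > y1" "f t2 \<le> pi/2" by blast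
      have "\<not> t2 < y1 + e"
      proof
        assume "t2 < y1 + e"
        then have "f t2 > f y1" using e(2) t2(1) by blast
        then show False using t2(2) y1(3) by simp
      qed
      then have ta: "y1 + e/2 < t2" using e by linarith
      have "continuous_on {y1 + e/2..t2} (\<lambda>x. pi/2 - f x)"
        using y1 e by (intro continuous_intros continuous_on_subset[OF contf]) auto
      moreover have "(\<lambda>x. pi/2 - f x) (y1 + e/2) < 0"
      proof -
        have "f (y1 + e/2) > f y1" using e by simp
        then show ?thesis using y1(3) by simp
      qed
      ultimately obtain q where q: "y1 + e/2 < q" "f q = pi/2" "\<forall>x. y1 + e/2 \<le> x \<and> x < q \<longrightarrow> f x > pi/2"
        using first_zero[OF ta, of "\<lambda>x. pi/2 - f x"] t2 by auto
      have fg: "f x > pi/2" if "y1 < x" "x < q" for x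
      proof (cases "x < y1 + e/2")
        case True
        then have "f x > f y1" using e that by simp
        then show ?thesis using y1(3) by simp
      next
        case False then show ?thesis using q(3) that by simp
      qed
      have qpos: "q > 0" "q > y1" using q y1 e by linarith+
      have Wq1: "W q < W y1"
        by (rule W_dec_R[OF y1(1) qpos(2)]) (use vn fg in auto)
      have F1q: "F1 q \<le> 0"
        by (rule deriv_left_nonpos[OF df[OF qpos(1)], of "y1 + e/2"]) (use q in auto)
      have "F1 q * v q \<ge> 0" using vn[of q] qpos F1q by (intro mult_nonpos_nonpos) auto
      moreover have "W q = w q * (F1 q * v q)" unfolding W_def q(2) by simp
      ultimately have "W q \<ge> 0" using w_pos[OF qpos(1)] by simp
      then show False using Wq1 Wy1n by simp
    next
      case False
      then have fg: "f x > pi/2" if "x > y1" for x using that by force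
      have Wd: "W x < W s" if "y1 \<le> s" "s < x" for s x
        by (rule W_dec_R) (use that y1(1) fg vn in auto)
      have "W (y1+1) < W y1" using Wd by simp
      moreover have "0 \<le> W (y1+1)"
      proof (rule tendsto_upperbound[OF W_limtop])
        show "\<forall>\<^sub>F x in at_top. W x \<le> W (y1+1)"
          using eventually_gt_at_top[of "y1+1"]
          by eventually_elim (auto intro!: less_imp_le Wd)
      qed simp
      ultimately show False using Wy1n by simp
    qed
  qed
qed

theorem contra: False
proof (cases "\<forall>t>0. f t < pi/2")
  case True then show False by (rule caseA)
next
  case False
  then obtain t where "t > 0" "\<not> f t < pi/2" by auto
  then show False using caseB[of t] by simp
qed

end


theorem theorem1:
  fixes d :: nat
  assumes "d \<ge> 7"
  shows "\<not> (\<exists>f :: real \<Rightarrow> real. smooth_on_halfline f \<and>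
     (\<forall>y>0. deriv (deriv f) y + ((real d - 1) / y - y / 2) * deriv f y
              - (real d - 1) / (2 * y\<^sup>2) * sin (2 * f y) = 0) \<and>
     f 0 = 0 \<and>
     (\<exists>a>0. (f has_real_derivative a) (at_right 0)) \<and>
     (\<exists>b::real. (f \<longlongrightarrow> b) at_top \<and>
        ((\<lambda>y. y ^ 3 * deriv f y) \<longlongrightarrow> - (real d - 1) * sin (2 * b)) at_top))"
proof
  assume "\<exists>f :: real \<Rightarrow> real. smooth_on_halfline f \<and>
     (\<forall>y>0. deriv (deriv f) y + ((real d - 1) / y - y / 2) * deriv f y
              - (real d - 1) / (2 * y\<^sup>2) * sin (2 * f y) = 0) \<and>
     f 0 = 0 \<and>
     (\<exists>a>0. (f has_real_derivative a) (at_right 0)) \<and>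
     (\<exists>b::real. (f \<longlongrightarrow> b) at_top \<and>
        ((\<lambda>y. y ^ 3 * deriv f y) \<longlongrightarrow> - (real d - 1) * sin (2 * b)) at_top)"
  then obtain f a b where sm: "smooth_on_halfline f"
    and ode: "\<forall>y>0. deriv (deriv f) y + ((real d - 1) / y - y / 2) * deriv f y
              - (real d - 1) / (2 * y\<^sup>2) * sin (2 * f y) = 0"
    and f0: "f 0 = 0" and a: "a > 0" "(f has_real_derivative a) (at_right 0)"
    and lf: "(f \<longlongrightarrow> b) at_top"
    and l3: "((\<lambda>y. y ^ 3 * deriv f y) \<longlongrightarrow> - (real d - 1) * sin (2 * b)) at_top"
    by blast
  obtain D where D0: "D 0 = f" and DD: "\<And>n y. y \<ge> 0 \<Longrightarrow> (D n has_real_derivative D (Suc n) y) (at y within {0..})"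
    using sm unfolding smooth_on_halfline_def by blast
  have at_eq: "at y within {0..} = at y" if "y > 0" for y :: real
    using that by (intro at_within_interior) auto
  have dn: "(D n has_real_derivative D (Suc n) y) (at y)" if "y > 0" for n y
    using DD[of y n] that at_eq[OF that] by simp
  have cont: "continuous_on {0..} (D n)" for n
    unfolding continuous_on_eq_continuous_within
    using DD by (auto intro: DERIV_continuous)
  have df: "(f has_real_derivative D 1 y) (at y)" if "y > 0" for y
    using dn[of y 0] that D0 by simp
  have dF1: "(D 1 has_real_derivative D 2 y) (at y)" if "y > 0" for y
    using dn[of y 1] that by (simp add: numeral_2_eq_2)
  have d1: "deriv f y = D 1 y" if "y > 0" for y using df[OF that] by (rule DERIV_imp_deriv)
  have d2: "deriv (deriv f) y = D 2 y" if "y > 0" for y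
  proof -
    have "(deriv f has_real_derivative D 2 y) (at y)"
      by (rule has_field_derivative_transform_within_open[OF dF1[OF that], of "{0<..}"])
         (use that d1 in auto)
    then show ?thesis by (rule DERIV_imp_deriv)
  qed
  have fpos: "\<exists>\<delta>>0. \<forall>y. 0<y \<and> y<\<delta> \<longrightarrow> f y > 0"
  proof -
    have "((\<lambda>y. (f y - f 0) / (y - 0)) \<longlongrightarrow> a) (at_right 0)"
      using a(2) by (simp add: has_field_derivative_iff)
    then have "eventually (\<lambda>y. (f y - f 0) / (y - 0) > 0) (at_right 0)"
      using a(1) by (rule order_tendstoD)
    then obtain \<delta> where "\<delta> > 0" "\<forall>y>0. y < \<delta> \<longrightarrow> (f y - f 0) / (y - 0) > 0"
      unfolding eventually_at_right_field by blast
    then show ?thesis using f0 by (intro exI[of _ \<delta>]) (auto simp: zero_less_divide_iff)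
  qed
  have l3': "((\<lambda>y. y ^ 3 * D 1 y) \<longlongrightarrow> - (real d - 1) * sin (2 * b)) at_top"
  proof (rule Lim_transform_eventually[OF l3])
    show "\<forall>\<^sub>F x in at_top. x ^ 3 * deriv f x = x ^ 3 * D 1 x"
      using eventually_gt_at_top[of 0] by eventually_elim (simp add: d1)
  qed
  interpret shr d f "D 1" "D 2" b "- (real d - 1) * sin (2 * b)"
  proof
    show "7 \<le> d" by (rule assms)
    show "f 0 = 0" by (rule f0)
    show "continuous_on {0..} f" using cont[of 0] D0 by simp
    show "continuous_on {0..} (D 1)" by (rule cont)
    show "\<And>y. y > 0 \<Longrightarrow> (f has_real_derivative D 1 y) (at y)" by (rule df)
    show "\<And>y. y > 0 \<Longrightarrow> (D 1 has_real_derivative D 2 y) (at y)" by (rule dF1)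
    show "\<And>y. y > 0 \<Longrightarrow> D 2 y + ((real d - 1)/y - y/2) * D 1 y - (real d - 1)/(2*y^2) * sin (2 * f y) = 0"
      using ode d1 d2 by simp
    show "\<exists>\<delta>>0. \<forall>y. 0<y \<and> y<\<delta> \<longrightarrow> f y > 0" by (rule fpos)
    show "(f \<longlongrightarrow> b) at_top" by (rule lf)
    show "((\<lambda>y. y^3 * D 1 y) \<longlongrightarrow> - (real d - 1) * sin (2 * b)) at_top" by (rule l3')
  qed
  show False by (rule contra)
qed

end
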